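(* Let $x,y\in\mathfrak h$. The numbers $\exp(\alpha_i(x+\sqrt{-1}y))$, $i=1,\dots,l$, are all real if and only if $y=\sum_{i=1}^lk_iy_i$ for some integers $k_i$. Moreover, for each $i$ and each odd integer $k_i$, the element $h_i=\exp(\sqrt{-1}k_iy_i)$ lies in $\tilde G$ and satisfies $h_i^2=e$ and $h_i\neq e$.
   Context: $\mathfrak g$ is a real split semisimple Lie algebra of rank $l$ with split Cartan subalgebra $\mathfrak h$ and simple roots $\alpha_1,\dots,\alpha_l$ (extended complex-linearly to $\mathfrak h_{\mathbb C}$). $G_{\mathbb C}$ is the connected adjoint group of $\mathfrak g\otimes\mathbb C$, with exponential map $\exp:\mathfrak g\otimes\mathbb C\to G_{\mathbb C}$, and $\tilde G=\{g\in G_{\mathbb C}:\mathrm{Ad}(g)\mathfrak g\subset\mathfrak g\}$. For $i=1,\dots,l$, $y_i=2\pi m^\circ_{\alpha_i}/(\alpha_i,\alpha_i)$, where $(\,,)$ is the Killing form and $m^\circ_{\alpha_i}\in\mathfrak h$ corresponds via the Killing form to the fundamental weight $m_{\alpha_i}$; equivalently $y_i\in\mathfrak h$ is determined by $\alpha_j(y_i)=\pi\delta_{ij}$ for all $j$. *)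

theory Defs
  imports "HOL-Analysis.Analysis"
begin

text \<open>A finite-dimensional real Lie algebra g is modelled as real^'n with structure
  constants c (bracket [e_i,e_j] = sum_k c i j k e_k).  Its complexification is complex^'n
  with the same (real) structure constants.\<close>

definition brR :: "('n::finite \<Rightarrow> 'n \<Rightarrow> 'n \<Rightarrow> real) \<Rightarrow> real^'n \<Rightarrow> real^'n \<Rightarrow> real^'n" where
  "brR c X Y = (\<chi> k. \<Sum>i\<in>UNIV. \<Sum>j\<in>UNIV. X$i * Y$j * c i j k)"

definition brC :: "('n::finite \<Rightarrow> 'n \<Rightarrow> 'n \<Rightarrow> real) \<Rightarrow> complex^'n \<Rightarrow> complex^'n \<Rightarrow> complex^'n" where
  "brC c X Y = (\<chi> k. \<Sum>i\<in>UNIV. \<Sum>j\<in>UNIV. X$i * Y$j * complex_of_real (c i j k))"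

text \<open>Matrix of ad(Z) on the complexification: adC c Z *v W = brC c Z W.\<close>
definition adC :: "('n::finite \<Rightarrow> 'n \<Rightarrow> 'n \<Rightarrow> real) \<Rightarrow> complex^'n \<Rightarrow> complex^'n^'n" where
  "adC c Z = (\<chi> k j. \<Sum>i\<in>UNIV. Z$i * complex_of_real (c i j k))"

definition cplx :: "real^'n \<Rightarrow> complex^'n" where
  "cplx x = (\<chi> i. complex_of_real (x$i))"

definition is_lie_algebra :: "('n::finite \<Rightarrow> 'n \<Rightarrow> 'n \<Rightarrow> real) \<Rightarrow> bool" where
  "is_lie_algebra c \<longleftrightarrow> (\<forall>X. brR c X X = 0) \<and>
     (\<forall>X Y Z. brR c X (brR c Y Z) + brR c Y (brR c Z X) + brR c Z (brR c X Y) = 0)"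

definition bracket_set :: "('n::finite \<Rightarrow> 'n \<Rightarrow> 'n \<Rightarrow> real) \<Rightarrow> (real^'n) set \<Rightarrow> (real^'n) set \<Rightarrow> (real^'n) set" where
  "bracket_set c A B = span {brR c a b | a b. a \<in> A \<and> b \<in> B}"

fun derived_series :: "('n::finite \<Rightarrow> 'n \<Rightarrow> 'n \<Rightarrow> real) \<Rightarrow> (real^'n) set \<Rightarrow> nat \<Rightarrow> (real^'n) set" where
  "derived_series c I 0 = I"
| "derived_series c I (Suc m) = bracket_set c (derived_series c I m) (derived_series c I m)"

fun lower_central :: "('n::finite \<Rightarrow> 'n \<Rightarrow> 'n \<Rightarrow> real) \<Rightarrow> (real^'n) set \<Rightarrow> nat \<Rightarrow> (real^'n) set" where
  "lower_central c I 0 = I"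
| "lower_central c I (Suc m) = bracket_set c I (lower_central c I m)"

definition lie_subalgebra :: "('n::finite \<Rightarrow> 'n \<Rightarrow> 'n \<Rightarrow> real) \<Rightarrow> (real^'n) set \<Rightarrow> bool" where
  "lie_subalgebra c A \<longleftrightarrow> subspace A \<and> (\<forall>X\<in>A. \<forall>Y\<in>A. brR c X Y \<in> A)"

definition lie_ideal :: "('n::finite \<Rightarrow> 'n \<Rightarrow> 'n \<Rightarrow> real) \<Rightarrow> (real^'n) set \<Rightarrow> bool" where
  "lie_ideal c I \<longleftrightarrow> subspace I \<and> (\<forall>X. \<forall>Y\<in>I. brR c X Y \<in> I)"

definition solvable_lie :: "('n::finite \<Rightarrow> 'n \<Rightarrow> 'n \<Rightarrow> real) \<Rightarrow> (real^'n) set \<Rightarrow> bool" where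
  "solvable_lie c I \<longleftrightarrow> (\<exists>m. derived_series c I m = {0})"

definition nilpotent_lie :: "('n::finite \<Rightarrow> 'n \<Rightarrow> 'n \<Rightarrow> real) \<Rightarrow> (real^'n) set \<Rightarrow> bool" where
  "nilpotent_lie c I \<longleftrightarrow> (\<exists>m. lower_central c I m = {0})"

definition semisimple :: "('n::finite \<Rightarrow> 'n \<Rightarrow> 'n \<Rightarrow> real) \<Rightarrow> bool" where
  "semisimple c \<longleftrightarrow> is_lie_algebra c \<and> (\<forall>I. lie_ideal c I \<and> solvable_lie c I \<longrightarrow> I = {0})"

text \<open>Split Cartan subalgebra: a Cartan subalgebra (nilpotent, self-normalizing) such that
  ad(H) is diagonalizable over the reals for every H in it.\<close>
definition split_cartan :: "('n::finite \<Rightarrow> 'n \<Rightarrow> 'n \<Rightarrow> real) \<Rightarrow> (real^'n) set \<Rightarrow> bool" where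
  "split_cartan c h \<longleftrightarrow> lie_subalgebra c h \<and> nilpotent_lie c h \<and>
     {X. \<forall>H\<in>h. brR c H X \<in> h} = h \<and>
     (\<forall>H\<in>h. \<exists>B. independent B \<and> span B = UNIV \<and> (\<forall>v\<in>B. \<exists>\<mu>. brR c H v = \<mu> *\<^sub>R v))"

text \<open>Roots are linear functionals on h, represented as functions vanishing outside h.\<close>
definition is_root :: "('n::finite \<Rightarrow> 'n \<Rightarrow> 'n \<Rightarrow> real) \<Rightarrow> (real^'n) set \<Rightarrow> (real^'n \<Rightarrow> real) \<Rightarrow> bool" where
  "is_root c h \<alpha> \<longleftrightarrow> (\<forall>x. x \<notin> h \<longrightarrow> \<alpha> x = 0) \<and>
     (\<forall>x\<in>h. \<forall>y\<in>h. \<alpha> (x + y) = \<alpha> x + \<alpha> y) \<and> (\<forall>a. \<forall>x\<in>h. \<alpha> (a *\<^sub>R x) = a * \<alpha> x) \<and>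
     (\<exists>H\<in>h. \<alpha> H \<noteq> 0) \<and> (\<exists>X. X \<noteq> 0 \<and> (\<forall>H\<in>h. brR c H X = \<alpha> H *\<^sub>R X))"

definition simple_roots :: "('n::finite \<Rightarrow> 'n \<Rightarrow> 'n \<Rightarrow> real) \<Rightarrow> (real^'n) set \<Rightarrow> nat \<Rightarrow> (nat \<Rightarrow> real^'n \<Rightarrow> real) \<Rightarrow> bool" where
  "simple_roots c h l \<alpha> \<longleftrightarrow> (\<forall>i<l. is_root c h (\<alpha> i)) \<and>
     (\<forall>a::nat \<Rightarrow> real. (\<forall>x\<in>h. (\<Sum>i<l. a i * \<alpha> i x) = 0) \<longrightarrow> (\<forall>i<l. a i = 0)) \<and>
     (\<forall>\<beta>. is_root c h \<beta> \<longrightarrow> (\<exists>n::nat \<Rightarrow> int. ((\<forall>i<l. n i \<ge> 0) \<or> (\<forall>i<l. n i \<le> 0)) \<and>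
          \<beta> = (\<lambda>x. \<Sum>i<l. of_int (n i) * \<alpha> i x)))"

definition ycoroot :: "(real^'n) set \<Rightarrow> nat \<Rightarrow> (nat \<Rightarrow> real^'n \<Rightarrow> real) \<Rightarrow> nat \<Rightarrow> real^'n" where
  "ycoroot h l \<alpha> i = (THE y. y \<in> h \<and> (\<forall>j<l. \<alpha> j y = (if j = i then pi else 0)))"

fun mpow :: "complex^'n^'n \<Rightarrow> nat \<Rightarrow> complex^'n^'n" where
  "mpow A 0 = mat 1"
| "mpow A (Suc m) = A ** mpow A m"

definition mexp :: "complex^'n^'n \<Rightarrow> complex^'n^'n" where
  "mexp A = (\<Sum>m. (1 / fact m) *\<^sub>R mpow A m)"

text \<open>exp : g_C -> G_C; G_C (adjoint group) is identified with its faithful image Ad(G_C)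
  in GL(g_C), so exp(Z) = e^{ad Z}.\<close>
definition gexp :: "('n::finite \<Rightarrow> 'n \<Rightarrow> 'n \<Rightarrow> real) \<Rightarrow> complex^'n \<Rightarrow> complex^'n^'n" where
  "gexp c Z = mexp (adC c Z)"

inductive_set adjoint_group :: "('n::finite \<Rightarrow> 'n \<Rightarrow> 'n \<Rightarrow> real) \<Rightarrow> (complex^'n^'n) set"
  for c where
  one: "mat 1 \<in> adjoint_group c"
| step: "A \<in> adjoint_group c \<Longrightarrow> gexp c Z ** A \<in> adjoint_group c"

definition Gtilde :: "('n::finite \<Rightarrow> 'n \<Rightarrow> 'n \<Rightarrow> real) \<Rightarrow> (complex^'n^'n) set" where
  "Gtilde c = {g \<in> adjoint_group c. \<forall>x::real^'n. \<exists>x'. g *v cplx x = cplx x'}"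

end

theory Submission
  imports Defs
begin


definition diagz :: "(real^'n \<Rightarrow> real^'n) \<Rightarrow> bool" where
  "diagz f \<longleftrightarrow> (\<exists>B. independent B \<and> span B = UNIV \<and> (\<forall>v\<in>B. \<exists>\<mu>. f v = \<mu> *\<^sub>R v))"

lemma funpow_eig:
  assumes "linear f" "f b = \<mu> *\<^sub>R b" shows "(f ^^ m) b = (\<mu> ^ m) *\<^sub>R b"
proof (induction m)
  case 0 then show ?case by simp
next
  case (Suc m)
  have "(f ^^ Suc m) b = f ((\<mu> ^ m) *\<^sub>R b)" using Suc by simp
  also have "\<dots> = (\<mu> ^ Suc m) *\<^sub>R b" using assms by (simp add: linear_scale mult_ac)
  finally show ?case .
qed

lemma linear_ident': "linear (\<lambda>x::real^'n. x)"
  by (rule linearI) auto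

lemma linear_funpow: fixes f :: "real^'n \<Rightarrow> real^'n" assumes "linear f" shows "linear (f ^^ m)"
proof (induction m)
  case 0 have "f^^0 = (\<lambda>x. x)" by auto
  then show ?case using linear_ident' by metis
next
  case (Suc m) show ?case using linear_compose[OF Suc.IH assms] by (simp only: funpow.simps)
qed

lemma diag_nilp:
  assumes lf: "linear f" and d: "diagz f" and w: "(f ^^ m) w = 0"
  shows "f w = 0"
proof -
  obtain B where iB: "independent B" and sB: "span B = UNIV" and eB: "\<forall>v\<in>B. \<exists>\<mu>. f v = \<mu> *\<^sub>R v"
    using d unfolding diagz_def by blast
  have fB: "finite B" using iB by (simp add: finiteI_independent)
  define mu where "mu v = (SOME \<mu>. f v = \<mu> *\<^sub>R v)" for v
  have mu: "f v = mu v *\<^sub>R v" if "v \<in> B" for v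
  proof -
    have "\<exists>\<mu>. f v = \<mu> *\<^sub>R v" using eB that by blast
    then show ?thesis unfolding mu_def by (rule someI_ex)
  qed
  have "w \<in> range (\<lambda>u. \<Sum>v\<in>B. u v *\<^sub>R v)" using span_finite[OF fB] sB by simp
  then obtain u where wu: "w = (\<Sum>v\<in>B. u v *\<^sub>R v)" by blast
  have lm: "linear (f ^^ m)" using linear_funpow[OF lf] .
  have "(f ^^ m) w = (\<Sum>v\<in>B. (f ^^ m) (u v *\<^sub>R v))"
    unfolding wu by (rule linear_sum[OF lm])
  also have "\<dots> = (\<Sum>v\<in>B. (u v * mu v ^ m) *\<^sub>R v)"
  proof (rule sum.cong)
    fix v assume v: "v \<in> B"
    show "(f ^^ m) (u v *\<^sub>R v) = (u v * mu v ^ m) *\<^sub>R v"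
      using linear_scale[OF lm] funpow_eig[OF lf mu[OF v]] by simp
  qed simp
  finally have e1: "(\<Sum>v\<in>B. (u v * mu v ^ m) *\<^sub>R v) = 0" using w by simp
  have ind: "\<forall>c. (\<Sum>v\<in>B. c v *\<^sub>R v) = 0 \<longrightarrow> (\<forall>v\<in>B. c v = 0)"
    using iB independent_explicit by blast
  have z: "u v * mu v = 0" if v: "v \<in> B" for v
  proof -
    have "u v * mu v ^ m = 0" using ind[rule_format, of "\<lambda>v. u v * mu v ^ m", OF e1] v by blast
    then show ?thesis by (cases "u v = 0") (auto simp: power_eq_0_iff)
  qed
  have "f w = (\<Sum>v\<in>B. f (u v *\<^sub>R v))"
    unfolding wu by (rule linear_sum[OF lf])
  also have "\<dots> = (\<Sum>v\<in>B. (u v * mu v) *\<^sub>R v)"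
  proof (rule sum.cong)
    fix v assume v: "v \<in> B"
    show "f (u v *\<^sub>R v) = (u v * mu v) *\<^sub>R v"
      using linear_scale[OF lf] mu[OF v] by simp
  qed simp
  also have "\<dots> = 0" by (rule sum.neutral) (simp add: z)
  finally show ?thesis .
qed

fun pcomp :: "(real^'n \<Rightarrow> real^'n) \<Rightarrow> real list \<Rightarrow> real^'n \<Rightarrow> real^'n" where
  "pcomp f [] = id"
| "pcomp f (m # ms) = pcomp f ms \<circ> (\<lambda>v. f v - m *\<^sub>R v)"

lemma linear_pcomp: "linear f \<Longrightarrow> linear (pcomp f ms)"
proof (induction ms)
  case Nil have "pcomp f [] = (\<lambda>x. x)" by auto
  then show ?case using linear_ident' by metis
next
  case (Cons m ms)
  have l1: "linear (\<lambda>v. f v - m *\<^sub>R v)"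
    by (rule linearI) (simp_all add: linear_add[OF Cons.prems] linear_scale[OF Cons.prems] algebra_simps)
  show ?case using linear_compose[OF l1 Cons.IH[OF Cons.prems]] by (simp add: comp_def)
qed

lemma pcomp_eig: "linear f \<Longrightarrow> f b = \<mu> *\<^sub>R b \<Longrightarrow> pcomp f ms b = (\<Prod>m\<leftarrow>ms. \<mu> - m) *\<^sub>R b"
proof (induction ms)
  case Nil then show ?case by simp
next
  case (Cons m ms)
  have "pcomp f (m # ms) b = pcomp f ms ((\<mu> - m) *\<^sub>R b)" using Cons.prems by (simp add: algebra_simps)
  also have "\<dots> = (\<mu> - m) *\<^sub>R pcomp f ms b" using linear_pcomp[OF Cons.prems(1)] by (simp add: linear_scale)
  finally show ?case using Cons by simp
qed

lemma pcomp_inv: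
  assumes "subspace W" "\<forall>v\<in>W. f v \<in> W"
  shows "w \<in> W \<Longrightarrow> w \<noteq> 0 \<Longrightarrow> pcomp f ms w = 0 \<Longrightarrow> \<exists>X\<in>W. X \<noteq> 0 \<and> (\<exists>\<nu>. f X = \<nu> *\<^sub>R X)"
proof (induction ms arbitrary: w)
  case Nil then show ?case by simp
next
  case (Cons m ms)
  show ?case
  proof (cases "f w - m *\<^sub>R w = 0")
    case True then have "f w = m *\<^sub>R w" by simp
    then show ?thesis using Cons.prems by blast
  next
    case False
    have "f w - m *\<^sub>R w \<in> W" using assms Cons.prems by (simp add: subspace_diff subspace_scale)
    then show ?thesis using Cons False by simp
  qed
qed

lemma eig_in_inv:
  assumes lf: "linear f" and d: "diagz f" and W: "subspace W" "\<forall>v\<in>W. f v \<in> W"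
    and w: "w \<in> W" "w \<noteq> 0"
  shows "\<exists>X\<in>W. X \<noteq> 0 \<and> (\<exists>\<nu>. f X = \<nu> *\<^sub>R X)"
proof -
  obtain B where iB: "independent B" and sB: "span B = UNIV" and eB: "\<forall>v\<in>B. \<exists>\<mu>. f v = \<mu> *\<^sub>R v"
    using d unfolding diagz_def by blast
  have fB: "finite B" using iB by (simp add: finiteI_independent)
  define mu where "mu v = (SOME \<mu>. f v = \<mu> *\<^sub>R v)" for v
  have mu: "f v = mu v *\<^sub>R v" if "v \<in> B" for v
  proof -
    have "\<exists>\<mu>. f v = \<mu> *\<^sub>R v" using eB that by blast
    then show ?thesis unfolding mu_def by (rule someI_ex)
  qed
  obtain ms where ms: "set ms = mu ` B" using finite_list[of "mu ` B"] fB by auto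
  have pz: "pcomp f ms v = 0" if v: "v \<in> B" for v
  proof -
    have "mu v \<in> set ms" using ms v by simp
    then have "(0::real) \<in> set (map (\<lambda>m. mu v - m) ms)" by force
    then have "(\<Prod>m\<leftarrow>ms. mu v - m) = 0" by (simp only: prod_list_zero_iff)
    then show ?thesis using pcomp_eig[OF lf mu[OF v], of ms] by simp
  qed
  have "pcomp f ms w = 0"
  proof (rule linear_eq_0_on_span[OF linear_pcomp[OF lf]])
    show "w \<in> span B" using sB by simp
  qed (rule pz)
  then show ?thesis by (rule pcomp_inv[OF W w])
qed



lemma subspace_eig:
  assumes "linear f" shows "subspace {v. f v = \<nu> *\<^sub>R v}"
  unfolding subspace_def using linear_0[OF assms] linear_add[OF assms] linear_scale[OF assms]
  by (auto simp: algebra_simps)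

lemma common_eig:
  fixes F :: "(real^'n \<Rightarrow> real^'n) set"
  assumes lin: "\<forall>f\<in>F. linear f" and dg: "\<forall>f\<in>F. diagz f"
    and cm: "\<forall>f\<in>F. \<forall>g\<in>F. \<forall>v. f (g v) = g (f v)"
  shows "subspace W \<Longrightarrow> W \<noteq> {0} \<Longrightarrow> (\<forall>f\<in>F. \<forall>w\<in>W. f w \<in> W) \<Longrightarrow>
     \<exists>X\<in>W. X \<noteq> 0 \<and> (\<forall>f\<in>F. \<exists>\<nu>. f X = \<nu> *\<^sub>R X)"
proof (induction "dim W" arbitrary: W rule: less_induct)
  case less
  have "0 \<in> W" using less.prems(1) by (rule subspace_0)
  then obtain w0 where w0: "w0 \<in> W" "w0 \<noteq> 0" using less.prems(2) by blast
  show ?case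
  proof (cases "\<forall>f\<in>F. \<exists>\<nu>. \<forall>w\<in>W. f w = \<nu> *\<^sub>R w")
    case True
    have "\<forall>f\<in>F. \<exists>\<nu>. f w0 = \<nu> *\<^sub>R w0"
    proof
      fix f assume "f \<in> F"
      then obtain \<nu> where "\<forall>w\<in>W. f w = \<nu> *\<^sub>R w" using True by blast
      then show "\<exists>\<nu>. f w0 = \<nu> *\<^sub>R w0" using w0 by blast
    qed
    then show ?thesis using w0 by blast
  next
    case False
    then obtain f where f: "f \<in> F" and nsc: "\<forall>\<nu>. \<exists>w\<in>W. f w \<noteq> \<nu> *\<^sub>R w" by blast
    have lf: "linear f" using lin f by blast
    have inv: "\<forall>v\<in>W. f v \<in> W" using less.prems(3) f by blast
    obtain X \<nu> where X: "X \<in> W" "X \<noteq> 0" "f X = \<nu> *\<^sub>R X"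
      using eig_in_inv[OF lf _ less.prems(1) inv w0] dg f by blast
    define W' where "W' = W \<inter> {v. f v = \<nu> *\<^sub>R v}"
    have sW': "subspace W'" unfolding W'_def
      by (rule subspace_inter[OF less.prems(1) subspace_eig[OF lf]])
    have nz: "W' \<noteq> {0}" using X unfolding W'_def by blast
    have inv': "\<forall>g\<in>F. \<forall>w\<in>W'. g w \<in> W'"
    proof (intro ballI)
      fix g w assume g: "g \<in> F" and w: "w \<in> W'"
      have "g w \<in> W" using less.prems(3) g w unfolding W'_def by blast
      moreover have "f (g w) = \<nu> *\<^sub>R g w"
      proof -
        have "f (g w) = g (f w)" using cm f g by blast
        also have "\<dots> = g (\<nu> *\<^sub>R w)" using w unfolding W'_def by simp
        also have "\<dots> = \<nu> *\<^sub>R g w" using lin g linear_scale by blast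
        finally show ?thesis .
      qed
      ultimately show "g w \<in> W'" unfolding W'_def by simp
    qed
    obtain w1 where w1: "w1 \<in> W" "f w1 \<noteq> \<nu> *\<^sub>R w1" using nsc by blast
    have psub: "W' \<subset> W" using w1 unfolding W'_def by blast
    have e1: "span W' = W'" using sW' by simp
    have e2: "span W = W" using less.prems(1) by simp
    have "span W' \<subset> span W" unfolding e1 e2 by (rule psub)
    then have "dim W' < dim W" by (rule dim_psubset)
    then obtain Y where "Y \<in> W'" "Y \<noteq> 0" "\<forall>g\<in>F. \<exists>\<nu>. g Y = \<nu> *\<^sub>R Y"
      using less.hyps[OF _ sW' nz inv'] by blast
    then show ?thesis unfolding W'_def by blast
  qed
qed



lemma brR_add_right: "brR c X (Y + Z) = brR c X Y + brR c X Z"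
  by (simp add: brR_def vec_eq_iff algebra_simps sum.distrib)
lemma brR_add_left: "brR c (X + Y) Z = brR c X Z + brR c Y Z"
  by (simp add: brR_def vec_eq_iff algebra_simps sum.distrib)
lemma brR_scale_right: "brR c X (a *\<^sub>R Y) = a *\<^sub>R brR c X Y"
  by (simp add: brR_def vec_eq_iff sum_distrib_left mult_ac)
lemma brR_scale_left: "brR c (a *\<^sub>R X) Y = a *\<^sub>R brR c X Y"
  by (simp add: brR_def vec_eq_iff sum_distrib_left mult_ac)
lemma linear_brR_right: "linear (brR c X)"
  by (rule linearI) (simp_all add: brR_add_right brR_scale_right)
lemma linear_brR_left: "linear (\<lambda>X. brR c X Y)"
  by (rule linearI) (simp_all add: brR_add_left brR_scale_left)
lemma brR_zero_right[simp]: "brR c X 0 = 0"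
  by (simp add: brR_def vec_eq_iff)
lemma brR_zero_left[simp]: "brR c 0 X = 0"
  by (simp add: brR_def vec_eq_iff)

lemma brR_antisym:
  assumes "is_lie_algebra c" shows "brR c X Y = - brR c Y X"
proof -
  have "brR c (X+Y) (X+Y) = 0" "brR c X X = 0" "brR c Y Y = 0" using assms by (auto simp: is_lie_algebra_def)
  then show ?thesis by (simp add: brR_add_left brR_add_right eq_neg_iff_add_eq_0 add.commute)
qed

lemma test: "independent (B::(real^'n) set) \<Longrightarrow> finite B \<and> (\<forall>c. (\<Sum>v\<in>B. c v *\<^sub>R v) = 0 \<longrightarrow> (\<forall>v \<in> B. c v = 0))"
  using independent_explicit by blast



lemma lc_pow:
  assumes sub: "lie_subalgebra c h" and H: "H \<in> h" and w: "w \<in> h"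
  shows "((brR c H) ^^ j) w \<in> lower_central c h j"
proof (induction j)
  case 0 then show ?case using w by simp
next
  case (Suc j)
  have "brR c H (((brR c H) ^^ j) w) \<in> {brR c a b | a b. a \<in> h \<and> b \<in> lower_central c h j}"
    using H Suc by blast
  then have "brR c H (((brR c H) ^^ j) w) \<in> lower_central c h (Suc j)"
    unfolding lower_central.simps bracket_set_def by (rule span_base)
  then show ?case by simp
qed

lemma cartan_abelian:
  assumes sc: "split_cartan c h" and H: "H \<in> h" and w: "w \<in> h"
  shows "brR c H w = 0"
proof -
  have sub: "lie_subalgebra c h" using sc by (simp add: split_cartan_def)
  obtain m where m: "lower_central c h m = {0}" using sc by (auto simp: split_cartan_def nilpotent_lie_def)
  have "((brR c H) ^^ m) w = 0" using lc_pow[OF sub H w, of m] m by simp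
  moreover have "diagz (brR c H)" using sc H unfolding split_cartan_def diagz_def by blast
  ultimately show ?thesis using diag_nilp[OF linear_brR_right] by blast
qed

lemma cartan_commute:
  assumes L: "is_lie_algebra c" and sc: "split_cartan c h" and H: "H \<in> h" and H': "H' \<in> h"
  shows "brR c H (brR c H' v) = brR c H' (brR c H v)"
proof -
  have J: "brR c H (brR c H' v) + brR c H' (brR c v H) + brR c v (brR c H H') = 0"
    using L unfolding is_lie_algebra_def by blast
  have z: "brR c H H' = 0" using cartan_abelian[OF sc H H'] .
  have a: "brR c v H = - brR c H v" using brR_antisym[OF L] .
  have n: "brR c H' (- x) = - brR c H' x" for x
    using linear_neg[OF linear_brR_right] by blast
  show ?thesis using J unfolding z a n by simp
qed

lemma weight_exists:
  assumes L: "is_lie_algebra c" and sc: "split_cartan c h" and y: "y \<in> h"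
    and b: "b \<noteq> 0" "brR c y b = \<mu> *\<^sub>R b"
  shows "\<exists>lam X. X \<noteq> 0 \<and> brR c y X = \<mu> *\<^sub>R X \<and> (\<forall>H\<in>h. brR c H X = lam H *\<^sub>R X)
     \<and> (\<forall>x. x \<notin> h \<longrightarrow> lam x = 0) \<and> (\<forall>x\<in>h. \<forall>z\<in>h. lam (x + z) = lam x + lam z)
     \<and> (\<forall>a. \<forall>x\<in>h. lam (a *\<^sub>R x) = a * lam x)"
proof -
  have sub: "subspace h" using sc by (simp add: split_cartan_def lie_subalgebra_def)
  define W where "W = {v. brR c y v = \<mu> *\<^sub>R v}"
  define F where "F = (\<lambda>H. brR c H) ` h"
  have sW: "subspace W" unfolding W_def by (rule subspace_eig[OF linear_brR_right])
  have nz: "W \<noteq> {0}" using b unfolding W_def by blast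
  have lin: "\<forall>f\<in>F. linear f" unfolding F_def using linear_brR_right by blast
  have dg: "\<forall>f\<in>F. diagz f" unfolding F_def diagz_def using sc unfolding split_cartan_def by blast
  have cm: "\<forall>f\<in>F. \<forall>g\<in>F. \<forall>v. f (g v) = g (f v)"
    unfolding F_def using cartan_commute[OF L sc] by blast
  have inv: "\<forall>f\<in>F. \<forall>w\<in>W. f w \<in> W"
  proof (intro ballI)
    fix f w assume f: "f \<in> F" and w: "w \<in> W"
    then obtain H where H: "H \<in> h" "f = brR c H" unfolding F_def by blast
    have "brR c y (brR c H w) = brR c H (brR c y w)" using cartan_commute[OF L sc y H(1)] .
    also have "\<dots> = \<mu> *\<^sub>R brR c H w" using w unfolding W_def by (simp add: brR_scale_right)
    finally show "f w \<in> W" unfolding W_def H(2) by simp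
  qed
  obtain X where X: "X \<in> W" "X \<noteq> 0" and ev: "\<forall>f\<in>F. \<exists>\<nu>. f X = \<nu> *\<^sub>R X"
    using common_eig[OF lin dg cm sW nz inv] by blast
  define lam where "lam x = (if x \<in> h then (SOME \<nu>. brR c x X = \<nu> *\<^sub>R X) else 0)" for x
  have lamH: "brR c H X = lam H *\<^sub>R X" if H: "H \<in> h" for H
  proof -
    have "\<exists>\<nu>. brR c H X = \<nu> *\<^sub>R X" using ev H unfolding F_def by blast
    then have "brR c H X = (SOME \<nu>. brR c H X = \<nu> *\<^sub>R X) *\<^sub>R X" by (rule someI_ex)
    then show ?thesis unfolding lam_def using H by simp
  qed
  have uniq: "a = b'" if "a *\<^sub>R X = b' *\<^sub>R X" for a b'
    using that X(2) by (simp add: scaleR_cancel_right)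
  have add: "\<forall>x\<in>h. \<forall>z\<in>h. lam (x + z) = lam x + lam z"
  proof (intro ballI)
    fix x z assume x: "x \<in> h" and z: "z \<in> h"
    have xz: "x + z \<in> h" using sub x z by (rule subspace_add)
    have "lam (x + z) *\<^sub>R X = (lam x + lam z) *\<^sub>R X"
      using lamH[OF xz] lamH[OF x] lamH[OF z] by (simp add: brR_add_left scaleR_add_left)
    then show "lam (x + z) = lam x + lam z" by (rule uniq)
  qed
  have sc': "\<forall>a. \<forall>x\<in>h. lam (a *\<^sub>R x) = a * lam x"
  proof (intro allI ballI)
    fix a x assume x: "x \<in> h"
    have ax: "a *\<^sub>R x \<in> h" using sub x by (rule subspace_scale)
    have "lam (a *\<^sub>R x) *\<^sub>R X = brR c (a *\<^sub>R x) X" using lamH[OF ax] by simp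
    also have "\<dots> = a *\<^sub>R (lam x *\<^sub>R X)" using lamH[OF x] by (simp add: brR_scale_left)
    also have "\<dots> = (a * lam x) *\<^sub>R X" by simp
    finally have "lam (a *\<^sub>R x) *\<^sub>R X = (a * lam x) *\<^sub>R X" .
    then show "lam (a *\<^sub>R x) = a * lam x" by (rule uniq)
  qed
  have out: "\<forall>x. x \<notin> h \<longrightarrow> lam x = 0" unfolding lam_def by simp
  have "brR c y X = \<mu> *\<^sub>R X" using X unfolding W_def by simp
  then show ?thesis using X(2) lamH add sc' out by blast
qed



lemma lin_on_sum:
  assumes sub: "subspace h" and add: "\<forall>x\<in>h. \<forall>y\<in>h. a (x + y) = a x + a y"
    and hom: "\<forall>r. \<forall>x\<in>h. a (r *\<^sub>R x) = r * a x"
  shows "finite S \<Longrightarrow> (\<forall>s\<in>S. f s \<in> h) \<Longrightarrow> a (\<Sum>s\<in>S. f s) = (\<Sum>s\<in>S. a (f s))"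
proof (induction S rule: finite_induct)
  case empty
  have "a (0 *\<^sub>R 0) = 0 * a 0" using hom subspace_0[OF sub] by blast
  then show ?case by simp
next
  case (insert s S)
  have "sum f S \<in> h" using insert.prems sub by (simp add: subspace_sum)
  then show ?case using insert add by simp
qed

lemma riesz_on:
  fixes h :: "(real^'n) set"
  assumes sub: "subspace h" and add: "\<forall>x\<in>h. \<forall>y\<in>h. a (x + y) = a x + a y"
    and hom: "\<forall>r. \<forall>x\<in>h. a (r *\<^sub>R x) = r * a x"
  shows "\<exists>v\<in>h. \<forall>y\<in>h. a y = v \<bullet> y"
proof -
  obtain B where B: "B \<subseteq> h" "pairwise orthogonal B" "\<And>x. x \<in> B \<Longrightarrow> norm x = 1"
      "independent B" "card B = dim h" "span B = h"
    using orthonormal_basis_subspace[OF sub] by blast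
  have fB: "finite B" using B(4) by (simp add: finiteI_independent)
  define v where "v = (\<Sum>b\<in>B. a b *\<^sub>R b)"
  have vh: "v \<in> h" unfolding v_def
  proof (rule subspace_sum[OF sub])
    fix b assume "b \<in> B" then show "a b *\<^sub>R b \<in> h" using B(1) subspace_scale[OF sub] by blast
  qed
  have "a y = v \<bullet> y" if y: "y \<in> h" for y
  proof -
    have ys: "y \<in> span B" using B(6) y by simp
    have ye: "(\<Sum>b\<in>B. (y \<bullet> b) *\<^sub>R b) = y"
      by (rule orthonormal_basis_expand[OF B(2) B(3) ys fB])
    have "a y = a (\<Sum>b\<in>B. (y \<bullet> b) *\<^sub>R b)" using ye by simp
    also have "\<dots> = (\<Sum>b\<in>B. a ((y \<bullet> b) *\<^sub>R b))"
    proof (rule lin_on_sum[OF sub add hom fB])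
      show "\<forall>b\<in>B. (y \<bullet> b) *\<^sub>R b \<in> h" using B(1) subspace_scale[OF sub] by blast
    qed
    also have "\<dots> = (\<Sum>b\<in>B. (y \<bullet> b) * a b)"
      using hom B(1) by (intro sum.cong) auto
    also have "\<dots> = (\<Sum>b\<in>B. a b * (b \<bullet> y))" by (intro sum.cong refl) (simp add: inner_commute)
    also have "\<dots> = v \<bullet> y" unfolding v_def by (simp add: inner_sum_left)
    finally show ?thesis .
  qed
  then show ?thesis using vh by blast
qed

lemma span_image_comb:
  fixes A :: "nat \<Rightarrow> real^'n"
  assumes fJ: "finite J"
  shows "span (A ` J) \<subseteq> range (\<lambda>d. \<Sum>j\<in>J. d j *\<^sub>R A j)"
proof (rule span_minimal)
  show "A ` J \<subseteq> range (\<lambda>d. \<Sum>j\<in>J. d j *\<^sub>R A j)"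
  proof
    fix x assume "x \<in> A ` J"
    then obtain j where j: "j \<in> J" "x = A j" by blast
    have aj: "(\<Sum>k\<in>J. (if k = j then 1 else 0) *\<^sub>R A k) = A j"
      using j(1) fJ by (simp add: if_distrib[of "\<lambda>r. r *\<^sub>R _"] sum.delta' cong: if_cong)
    show "x \<in> range (\<lambda>d. \<Sum>j\<in>J. d j *\<^sub>R A j)" unfolding j(2)
      by (rule image_eqI[where x="\<lambda>k. if k = j then 1 else 0"]) (simp_all add: aj)
  qed
  show "subspace (range (\<lambda>d. \<Sum>j\<in>J. d j *\<^sub>R A j))"
    unfolding subspace_def
  proof (intro conjI ballI allI)
    show "0 \<in> range (\<lambda>d. \<Sum>j\<in>J. d j *\<^sub>R A j)"
      by (rule image_eqI[of _ _ "\<lambda>_. 0"]) auto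
    fix x y assume x: "x \<in> range (\<lambda>d. \<Sum>j\<in>J. d j *\<^sub>R A j)" and y: "y \<in> range (\<lambda>d. \<Sum>j\<in>J. d j *\<^sub>R A j)"
    then obtain d e where "x = (\<Sum>j\<in>J. d j *\<^sub>R A j)" "y = (\<Sum>j\<in>J. e j *\<^sub>R A j)" by blast
    then have eq: "x + y = (\<Sum>j\<in>J. (d j + e j) *\<^sub>R A j)" by (simp add: sum.distrib scaleR_add_left)
    show "x + y \<in> range (\<lambda>d. \<Sum>j\<in>J. d j *\<^sub>R A j)"
      by (rule image_eqI[where x="\<lambda>j. d j + e j"]) (simp_all add: eq)
  next
    fix r x assume x: "x \<in> range (\<lambda>d. \<Sum>j\<in>J. d j *\<^sub>R A j)"
    then obtain d where "x = (\<Sum>j\<in>J. d j *\<^sub>R A j)" by blast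
    then have eq: "r *\<^sub>R x = (\<Sum>j\<in>J. (r * d j) *\<^sub>R A j)" by (simp add: scaleR_sum_right)
    show "r *\<^sub>R x \<in> range (\<lambda>d. \<Sum>j\<in>J. d j *\<^sub>R A j)"
      by (rule image_eqI[where x="\<lambda>j. r * d j"]) (simp_all add: eq)
  qed
qed



context
  fixes c :: "'n::finite \<Rightarrow> 'n \<Rightarrow> 'n \<Rightarrow> real" and h :: "(real^'n) set" and l :: nat
    and \<alpha> :: "nat \<Rightarrow> real^'n \<Rightarrow> real"
  assumes sc: "split_cartan c h" and dimh: "l = dim h" and sr: "simple_roots c h l \<alpha>"
begin

lemma subh: "subspace h"
  using sc by (simp add: split_cartan_def lie_subalgebra_def)

lemma al_add: "i < l \<Longrightarrow> \<forall>x\<in>h. \<forall>y\<in>h. \<alpha> i (x + y) = \<alpha> i x + \<alpha> i y"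
  using sr by (simp add: simple_roots_def is_root_def)

lemma al_hom: "i < l \<Longrightarrow> \<forall>r. \<forall>x\<in>h. \<alpha> i (r *\<^sub>R x) = r * \<alpha> i x"
  using sr by (simp add: simple_roots_def is_root_def)

lemma al_zero: "i < l \<Longrightarrow> \<alpha> i 0 = 0"
  using al_hom[of i] subspace_0[OF subh] by (metis mult_zero_left scaleR_zero_left)

lemma al_diff: "i < l \<Longrightarrow> x \<in> h \<Longrightarrow> y \<in> h \<Longrightarrow> \<alpha> i (x - y) = \<alpha> i x - \<alpha> i y"
proof -
  assume i: "i < l" and x: "x \<in> h" and y: "y \<in> h"
  have "x - y \<in> h" using subh x y by (rule subspace_diff)
  then have "\<alpha> i ((x - y) + y) = \<alpha> i (x - y) + \<alpha> i y" using al_add[OF i] y by blast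
  then show ?thesis by simp
qed

lemma riesz_A: "\<exists>A. \<forall>i<l. A i \<in> h \<and> (\<forall>y\<in>h. \<alpha> i y = A i \<bullet> y)"
proof -
  define A where "A i = (SOME v. v \<in> h \<and> (\<forall>y\<in>h. \<alpha> i y = v \<bullet> y))" for i
  have "A i \<in> h \<and> (\<forall>y\<in>h. \<alpha> i y = A i \<bullet> y)" if i: "i < l" for i
  proof -
    have "\<exists>v. v \<in> h \<and> (\<forall>y\<in>h. \<alpha> i y = v \<bullet> y)"
      using riesz_on[OF subh al_add[OF i] al_hom[OF i]] by blast
    then show ?thesis unfolding A_def by (rule someI_ex)
  qed
  then show ?thesis by blast
qed

lemma coroot_exists:
  assumes i: "i < l"
  shows "\<exists>w\<in>h. \<forall>j<l. \<alpha> j w = (if j = i then pi else 0)"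
proof -
  obtain A where A: "\<And>k. k < l \<Longrightarrow> A k \<in> h" and Ar: "\<And>k y. k < l \<Longrightarrow> y \<in> h \<Longrightarrow> \<alpha> k y = A k \<bullet> y"
    using riesz_A by blast
  define J where "J = {..<l} - {i}"
  have fJ: "finite J" unfolding J_def by simp
  define S where "S = A ` J"
  obtain p z where p: "p \<in> span S" and orth: "\<And>w. w \<in> span S \<Longrightarrow> orthogonal z w" and dec: "A i = p + z"
    using orthogonal_subspace_decomp_exists[of S "A i"] by blast
  have Sh: "S \<subseteq> h" unfolding S_def J_def using A by auto
  have spS: "span S \<subseteq> h" using span_minimal[OF Sh subh] .
  have zeq: "z = A i - p" using dec by simp
  have zh: "z \<in> h" unfolding zeq using subh A[OF i] p spS by (blast intro: subspace_diff)
  have zj: "A j \<bullet> z = 0" if j: "j < l" "j \<noteq> i" for j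
  proof -
    have "A j \<in> span S" unfolding S_def J_def using j by (intro span_base) auto
    then have "orthogonal z (A j)" by (rule orth)
    then show ?thesis by (simp add: orthogonal_def inner_commute)
  qed
  have zi: "A i \<bullet> z = z \<bullet> z"
  proof -
    have "orthogonal z p" using p by (rule orth)
    then have "p \<bullet> z = 0" by (simp add: orthogonal_def inner_commute)
    then show ?thesis unfolding dec by (simp add: inner_add_left)
  qed
  have znz: "z \<noteq> 0"
  proof
    assume z0: "z = 0"
    have "p \<in> range (\<lambda>d. \<Sum>j\<in>J. d j *\<^sub>R A j)" using p span_image_comb[OF fJ, of A] unfolding S_def by blast
    then obtain d where pd: "p = (\<Sum>j\<in>J. d j *\<^sub>R A j)" by blast
    define cf where "cf k = (if k = i then -1 else d k)" for k
    have ins: "{..<l} = insert i J" and iJ: "i \<notin> J" unfolding J_def using i by auto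
    have "(\<Sum>k<l. cf k *\<^sub>R A k) = cf i *\<^sub>R A i + (\<Sum>k\<in>J. cf k *\<^sub>R A k)"
      unfolding ins using fJ iJ by simp
    also have "(\<Sum>k\<in>J. cf k *\<^sub>R A k) = p" unfolding pd cf_def using iJ by (intro sum.cong) auto
    also have "cf i *\<^sub>R A i = - p" unfolding cf_def using dec z0 by simp
    finally have s0: "(\<Sum>k<l. cf k *\<^sub>R A k) = 0" by simp
    have "\<forall>x\<in>h. (\<Sum>k<l. cf k * \<alpha> k x) = 0"
    proof
      fix x assume x: "x \<in> h"
      have "(\<Sum>k<l. cf k * \<alpha> k x) = (\<Sum>k<l. cf k * (A k \<bullet> x))"
        using Ar x by (intro sum.cong) auto
      also have "\<dots> = (\<Sum>k<l. cf k *\<^sub>R A k) \<bullet> x" by (simp add: inner_sum_left)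
      finally show "(\<Sum>k<l. cf k * \<alpha> k x) = 0" using s0 by simp
    qed
    then have "\<forall>k<l. cf k = 0" using sr unfolding simple_roots_def by blast
    then show False using i unfolding cf_def by auto
  qed
  have zz: "z \<bullet> z > 0" using znz by simp
  define w where "w = (pi / (z \<bullet> z)) *\<^sub>R z"
  have wh: "w \<in> h" unfolding w_def using subh zh by (rule subspace_scale)
  have "\<alpha> j w = (if j = i then pi else 0)" if j: "j < l" for j
  proof -
    have "\<alpha> j w = (pi / (z \<bullet> z)) * (A j \<bullet> z)" using Ar[OF j wh] unfolding w_def by simp
    then show ?thesis using zj[OF j] zi zz by auto
  qed
  then show ?thesis using wh by blast
qed

lemma coroot_unique0:
  assumes d: "d \<in> h" and d0: "\<forall>j<l. \<alpha> j d = 0"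
  shows "d = 0"
proof -
  define Y where "Y i = (SOME w. w \<in> h \<and> (\<forall>j<l. \<alpha> j w = (if j = i then pi else 0)))" for i
  have Y: "Y i \<in> h \<and> (\<forall>j<l. \<alpha> j (Y i) = (if j = i then pi else 0))" if i: "i < l" for i
  proof -
    have "\<exists>w. w \<in> h \<and> (\<forall>j<l. \<alpha> j w = (if j = i then pi else 0))" using coroot_exists[OF i] by blast
    then show ?thesis unfolding Y_def by (rule someI_ex)
  qed
  have comb: "\<alpha> j (\<Sum>i<l. e i *\<^sub>R Y i) = e j * pi" if j: "j < l" for e j
  proof -
    have "\<alpha> j (\<Sum>i<l. e i *\<^sub>R Y i) = (\<Sum>i<l. \<alpha> j (e i *\<^sub>R Y i))"
    proof (rule lin_on_sum[OF subh al_add[OF j] al_hom[OF j]])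
      show "\<forall>i\<in>{..<l}. e i *\<^sub>R Y i \<in> h" using Y subspace_scale[OF subh] by blast
    qed simp
    also have "\<dots> = (\<Sum>i<l. e i * (if j = i then pi else 0))"
    proof (rule sum.cong)
      fix i assume "i \<in> {..<l}"
      then have i: "i < l" by simp
      have "\<alpha> j (e i *\<^sub>R Y i) = e i * \<alpha> j (Y i)" using al_hom[OF j] Y[OF i] by blast
      also have "\<alpha> j (Y i) = (if j = i then pi else 0)" using Y[OF i] j by blast
      finally show "\<alpha> j (e i *\<^sub>R Y i) = e i * (if j = i then pi else 0)" .
    qed simp
    also have "\<dots> = e j * pi" using j by (simp add: if_distrib cong: if_cong)
    finally show ?thesis .
  qed
  have inj: "inj_on Y {..<l}"
  proof (rule inj_onI)
    fix i i' assume i: "i \<in> {..<l}" and i': "i' \<in> {..<l}" and eq: "Y i = Y i'"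
    show "i = i'"
    proof (rule ccontr)
      assume ne: "i \<noteq> i'"
      have "\<alpha> i (Y i) = pi" using Y i by auto
      moreover have "\<alpha> i (Y i') = 0" using Y i i' ne by auto
      ultimately show False using eq by simp
    qed
  qed
  define T where "T = Y ` {..<l}"
  have fT: "finite T" unfolding T_def by simp
  have cT: "card T = l" unfolding T_def using card_image[OF inj] by simp
  have Th: "T \<subseteq> h" unfolding T_def using Y by auto
  have reidx: "(\<Sum>v\<in>T. u v *\<^sub>R v) = (\<Sum>i<l. u (Y i) *\<^sub>R Y i)" for u
    unfolding T_def using sum.reindex[OF inj, of "\<lambda>v. u v *\<^sub>R v"] by simp
  have coef0: "\<forall>v\<in>T. u v = 0" if u: "\<forall>j<l. \<alpha> j (\<Sum>v\<in>T. u v *\<^sub>R v) = 0" for u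
  proof
    fix v assume "v \<in> T"
    then obtain j where j: "j < l" "v = Y j" unfolding T_def by blast
    have "u (Y j) * pi = 0" using u j comb[OF j(1), of "\<lambda>i. u (Y i)"] unfolding reidx by simp
    then show "u v = 0" using j by simp
  qed
  have indT: "independent T"
    unfolding independent_explicit
  proof (intro conjI allI impI)
    show "finite T" by (rule fT)
    fix u assume "(\<Sum>v\<in>T. u v *\<^sub>R v) = 0"
    then have "\<forall>j<l. \<alpha> j (\<Sum>v\<in>T. u v *\<^sub>R v) = 0" using al_zero by simp
    then show "\<forall>v\<in>T. u v = 0" by (rule coef0)
  qed
  have "h \<subseteq> span T" using card_ge_dim_independent[OF Th indT] cT dimh by simp
  then have "d \<in> range (\<lambda>u. \<Sum>v\<in>T. u v *\<^sub>R v)" using d span_finite[OF fT] by blast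
  then obtain u where du: "d = (\<Sum>v\<in>T. u v *\<^sub>R v)" by blast
  have "\<forall>v\<in>T. u v = 0" using d0 du coef0 by blast
  then show ?thesis unfolding du by simp
qed

lemma ycoroot_props:
  assumes i: "i < l"
  shows "ycoroot h l \<alpha> i \<in> h \<and> (\<forall>j<l. \<alpha> j (ycoroot h l \<alpha> i) = (if j = i then pi else 0))"
proof -
  let ?P = "\<lambda>y. y \<in> h \<and> (\<forall>j<l. \<alpha> j y = (if j = i then pi else 0))"
  have "\<exists>!y. ?P y"
  proof (rule ex_ex1I)
    show "\<exists>y. ?P y" using coroot_exists[OF i] by blast
    fix y y' assume y: "?P y" and y': "?P y'"
    have "y - y' \<in> h" using subh y y' by (blast intro: subspace_diff)
    moreover have "\<forall>j<l. \<alpha> j (y - y') = 0" using al_diff y y' by simp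
    ultimately have "y - y' = 0" by (rule coroot_unique0)
    then show "y = y'" by simp
  qed
  then have "?P (THE y. ?P y)" by (rule theI')
  then show ?thesis unfolding ycoroot_def .
qed

end


type_synonym 'n cmat = "complex^'n^'n"

lemma adC_mv: "adC c Z *v W = brC c Z W"
  unfolding adC_def brC_def matrix_vector_mult_def vec_eq_iff
proof
  fix k
  show "(\<chi> i. \<Sum>j\<in>UNIV. (\<chi> k j. \<Sum>i\<in>UNIV. Z $ i * complex_of_real (c i j k)) $ i $ j * W $ j) $ k =
        (\<chi> k. \<Sum>i\<in>UNIV. \<Sum>j\<in>UNIV. Z $ i * W $ j * complex_of_real (c i j k)) $ k"
    by (simp add: sum_distrib_left sum_distrib_right mult_ac) (rule sum.swap)
qed

lemma brC_cplx: "brC c (w *s cplx y) (cplx v) = w *s cplx (brR c y v)"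
  unfolding brC_def cplx_def brR_def
  by (simp add: vec_eq_iff sum_distrib_left mult_ac)

lemma cplx_scale: "cplx (a *\<^sub>R x) = complex_of_real a *s cplx x"
  by (simp add: cplx_def vec_eq_iff)
lemma cplx_add: "cplx (x + y) = cplx x + cplx y"
  by (simp add: cplx_def vec_eq_iff)
lemma cplx_zero: "cplx 0 = 0"
  by (simp add: cplx_def vec_eq_iff)
lemma cplx_inj: "cplx x = cplx y \<Longrightarrow> x = y"
  by (simp add: cplx_def vec_eq_iff)
lemma cplx_sum: "cplx (\<Sum>b\<in>S. f b) = (\<Sum>b\<in>S. cplx (f b))"
  by (induction S rule: infinite_finite_induct) (auto simp: cplx_zero cplx_add)

lemma ad_eig:
  assumes "brR c y b = \<mu> *\<^sub>R b"
  shows "adC c (w *s cplx y) *v cplx b = (w * complex_of_real \<mu>) *s cplx b"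
  using assms by (simp add: adC_mv brC_cplx cplx_scale vector_smult_assoc)

lemma mpow_eig:
  assumes "A *v u = e *s u" shows "mpow A m *v u = (e ^ m) *s u"
proof (induction m)
  case 0 then show ?case by simp
next
  case (Suc m)
  have "mpow A (Suc m) *v u = A *v (mpow A m *v u)" by (simp add: matrix_vector_mul_assoc)
  also have "\<dots> = A *v ((e ^ m) *s u)" using Suc by simp
  also have "\<dots> = (e ^ m) *s (A *v u)" by (simp add: vector_scalar_commute)
  also have "\<dots> = (e ^ Suc m) *s u" using assms by (simp add: vector_smult_assoc mult_ac)
  finally show ?case .
qed

definition l1m :: "complex^'n^'n \<Rightarrow> real" where
  "l1m M = (\<Sum>i\<in>UNIV. \<Sum>j\<in>UNIV. norm (M$i$j))"

lemma norm_vec_le_l1: "norm (x :: 'a::real_normed_vector^'n) \<le> (\<Sum>i\<in>UNIV. norm (x$i))"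
  unfolding norm_vec_def by (rule L2_set_le_sum) simp

lemma norm_le_l1m: "norm M \<le> l1m M"
proof -
  have "norm M \<le> (\<Sum>i\<in>UNIV. norm (M$i))" by (rule norm_vec_le_l1)
  also have "\<dots> \<le> l1m M" unfolding l1m_def by (intro sum_mono norm_vec_le_l1)
  finally show ?thesis .
qed

lemma l1m_nonneg: "0 \<le> l1m M"
  unfolding l1m_def by (intro sum_nonneg) simp

lemma l1m_mult: "l1m (A ** B) \<le> l1m A * l1m B"
proof -
  have "l1m (A ** B) = (\<Sum>i\<in>UNIV. \<Sum>j\<in>UNIV. norm (\<Sum>k\<in>UNIV. A$i$k * B$k$j))"
    unfolding l1m_def matrix_matrix_mult_def by simp
  also have "\<dots> \<le> (\<Sum>i\<in>UNIV. \<Sum>j\<in>UNIV. \<Sum>k\<in>UNIV. norm (A$i$k) * norm (B$k$j))"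
    by (intro sum_mono order_trans[OF norm_sum]) (simp add: norm_mult)
  also have "\<dots> = (\<Sum>i\<in>UNIV. \<Sum>k\<in>UNIV. norm (A$i$k) * (\<Sum>j\<in>UNIV. norm (B$k$j)))"
    by (simp add: sum_distrib_left) (rule sum.cong[OF refl], rule sum.swap)
  also have "\<dots> \<le> (\<Sum>i\<in>UNIV. \<Sum>k\<in>UNIV. norm (A$i$k) * l1m B)"
  proof (intro sum_mono mult_left_mono)
    fix k
    show "(\<Sum>j\<in>UNIV. norm (B$k$j)) \<le> l1m B"
      unfolding l1m_def by (rule member_le_sum) (auto intro: sum_nonneg)
  qed simp
  also have "\<dots> = l1m A * l1m B" unfolding l1m_def by (simp add: sum_distrib_right)
  finally show ?thesis .
qed

lemma l1m_mpow: fixes A :: "complex^'n^'n" shows "l1m (mpow A m) \<le> l1m A ^ m * l1m (mat 1 :: complex^'n^'n)"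
proof (induction m)
  case 0 then show ?case by simp
next
  case (Suc m)
  have "l1m (mpow A (Suc m)) \<le> l1m A * l1m (mpow A m)" using l1m_mult by simp
  also have "\<dots> \<le> l1m A * (l1m A ^ m * l1m (mat 1 :: complex^'n^'n))"
    using Suc l1m_nonneg by (intro mult_left_mono) auto
  finally show ?case by (simp add: mult_ac)
qed

lemma mexp_summable: "summable (\<lambda>m. (1 / fact m) *\<^sub>R mpow (A::complex^'n^'n) m)"
proof (rule summable_comparison_test)
  let ?g = "\<lambda>m. l1m (mat 1 :: complex^'n^'n) * (inverse (fact m) * l1m A ^ m)"
  show "summable ?g" by (intro summable_mult summable_exp)
  show "\<exists>N. \<forall>n\<ge>N. norm ((1 / fact n) *\<^sub>R mpow A n) \<le> ?g n"
  proof (intro exI allI impI)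
    fix n :: nat
    have "norm ((1 / fact n) *\<^sub>R mpow A n) = (1 / fact n) * norm (mpow A n)" by simp
    also have "\<dots> \<le> (1 / fact n) * (l1m A ^ n * l1m (mat 1 :: complex^'n^'n))"
      using order_trans[OF norm_le_l1m l1m_mpow] by (intro mult_left_mono) auto
    also have "\<dots> = ?g n" by (simp add: field_simps)
    finally show "norm ((1 / fact n) *\<^sub>R mpow A n) \<le> ?g n" .
  qed
qed

lemma mv_scaleR: "(r *\<^sub>R M) *v u = r *\<^sub>R (M *v (u::complex^'n))"
  by (simp add: matrix_vector_mult_def vec_eq_iff scaleR_sum_right)

lemma bl_mv: "bounded_linear (\<lambda>M::complex^'n^'n. M *v u)"
proof -
  have "linear (\<lambda>M::complex^'n^'n. M *v u)"
    by (rule linearI) (simp_all add: matrix_vector_mult_def vec_eq_iff sum.distrib distrib_right scaleR_sum_right)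
  then show ?thesis by (simp add: linear_conv_bounded_linear)
qed

lemma bl_sv: "bounded_linear (\<lambda>z::complex. z *s u)"
proof -
  have "linear (\<lambda>z::complex. z *s u)"
    by (rule linearI) (simp_all add: vec_eq_iff distrib_right)
  then show ?thesis by (simp add: linear_conv_bounded_linear)
qed

lemma mexp_eig:
  assumes "A *v u = e *s u" shows "mexp A *v u = exp e *s u"
proof -
  have "(\<lambda>m. (1 / fact m) *\<^sub>R mpow A m) sums mexp A"
    unfolding mexp_def by (rule summable_sums[OF mexp_summable])
  from bounded_linear.sums[OF bl_mv this]
  have s1: "(\<lambda>m. ((1 / fact m) *\<^sub>R mpow A m) *v u) sums (mexp A *v u)" .
  have "(\<lambda>m. (e ^ m /\<^sub>R fact m) *s u) sums (exp e *s u)"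
    by (rule bounded_linear.sums[OF bl_sv exp_converges])
  moreover have "((1 / fact m) *\<^sub>R mpow A m) *v u = (e ^ m /\<^sub>R fact m) *s u" for m
  proof -
    have "((1 / fact m) *\<^sub>R mpow A m) *v u = (1 / fact m) *\<^sub>R (mpow A m *v u)"
      by (simp add: mv_scaleR)
    also have "\<dots> = (e ^ m /\<^sub>R fact m) *s u" using mpow_eig[OF assms, of m]
      by (simp add: vec_eq_iff divide_inverse_commute)
    finally show ?thesis .
  qed
  ultimately show ?thesis using s1 sums_unique2 by simp
qed



lemma exp_real_iff:
  "exp (complex_of_real a + \<i> * complex_of_real b) \<in> \<real> \<longleftrightarrow> (\<exists>m::int. b = of_int m * pi)"
proof -
  have "Im (exp (complex_of_real a + \<i> * complex_of_real b)) = exp a * sin b"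
    by (simp add: Im_exp)
  then have "exp (complex_of_real a + \<i> * complex_of_real b) \<in> \<real> \<longleftrightarrow> sin b = 0"
    by (simp add: complex_is_Real_iff)
  then show ?thesis by (simp add: sin_zero_iff_int2)
qed

lemma exp_i_int_pi:
  assumes "t = of_int m * pi"
  shows "exp (\<i> * complex_of_real t) = complex_of_real (cos t) \<and> (cos t)\<^sup>2 = 1"
proof -
  have s: "sin t = 0" using assms sin_zero_iff_int2 by blast
  have "exp (\<i> * complex_of_real t) = cis t" by (simp add: cis_conv_exp)
  also have "\<dots> = complex_of_real (cos t)" using s by (simp add: complex_eq_iff)
  finally show ?thesis using s sin_cos_squared_add[of t] by simp
qed

lemma mv_sum: "M *v (\<Sum>b\<in>S. f b) = (\<Sum>b\<in>S. M *v f b)" for M :: "complex^'n^'n"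
  by (induction S rule: infinite_finite_induct) (auto simp: matrix_vector_right_distrib)

lemma mv_cplx_comb:
  fixes M :: "complex^'n^'n"
  shows "M *v cplx (\<Sum>b\<in>B. u b *\<^sub>R b) = (\<Sum>b\<in>B. complex_of_real (u b) *s (M *v cplx b))"
  by (simp add: cplx_sum cplx_scale mv_sum vector_scalar_commute)

lemma mat_eq_cplx:
  fixes M :: "complex^'n^'n"
  assumes "\<forall>x. M *v cplx x = cplx x"
  shows "M = mat 1"
proof -
  have "M $ i $ j = mat 1 $ i $ j" for i j
  proof -
    have "(M *v cplx (axis j 1)) $ i = (\<Sum>k\<in>UNIV. M $ i $ k * complex_of_real (if k = j then 1 else 0))"
      by (simp add: matrix_vector_mult_def cplx_def axis_def)
    also have "\<dots> = M $ i $ j" by (simp add: if_distrib cong: if_cong)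
    finally have "M $ i $ j = (cplx (axis j (1::real))) $ i" using assms by simp
    then show ?thesis by (simp add: cplx_def axis_def mat_def)
  qed
  then show ?thesis by (simp add: vec_eq_iff)
qed

context
  fixes c :: "'n::finite \<Rightarrow> 'n \<Rightarrow> 'n \<Rightarrow> real" and h :: "(real^'n) set" and l :: nat
    and \<alpha> :: "nat \<Rightarrow> real^'n \<Rightarrow> real"
  assumes L: "is_lie_algebra c" and sc: "split_cartan c h" and dimh: "l = dim h" and sr: "simple_roots c h l \<alpha>"
begin

lemma Yh: "i < l \<Longrightarrow> ycoroot h l \<alpha> i \<in> h"
  using ycoroot_props[OF sc dimh sr] by blast

lemma Yv: "i < l \<Longrightarrow> j < l \<Longrightarrow> \<alpha> j (ycoroot h l \<alpha> i) = (if j = i then pi else 0)"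
  using ycoroot_props[OF sc dimh sr] by blast

lemma ycomb: "j < l \<Longrightarrow> \<alpha> j (\<Sum>i<l. e i *\<^sub>R ycoroot h l \<alpha> i) = e j * pi"
proof -
  assume j: "j < l"
  have "\<alpha> j (\<Sum>i<l. e i *\<^sub>R ycoroot h l \<alpha> i) = (\<Sum>i<l. \<alpha> j (e i *\<^sub>R ycoroot h l \<alpha> i))"
  proof (rule lin_on_sum[OF subh[OF sc dimh sr] al_add[OF sc dimh sr j] al_hom[OF sc dimh sr j]])
    show "\<forall>i\<in>{..<l}. e i *\<^sub>R ycoroot h l \<alpha> i \<in> h" using Yh subspace_scale[OF subh[OF sc dimh sr]] by blast
  qed simp
  also have "\<dots> = (\<Sum>i<l. e i * (if j = i then pi else 0))"
  proof (rule sum.cong)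
    fix i assume "i \<in> {..<l}"
    then have i: "i < l" by simp
    have "\<alpha> j (e i *\<^sub>R ycoroot h l \<alpha> i) = e i * \<alpha> j (ycoroot h l \<alpha> i)"
      using al_hom[OF sc dimh sr j] Yh[OF i] by blast
    also have "\<alpha> j (ycoroot h l \<alpha> i) = (if j = i then pi else 0)" using Yv[OF i j] .
    finally show "\<alpha> j (e i *\<^sub>R ycoroot h l \<alpha> i) = e i * (if j = i then pi else 0)" .
  qed simp
  also have "\<dots> = e j * pi" using j by (simp add: if_distrib cong: if_cong)
  finally show ?thesis .
qed

lemma sumY_h: "(\<Sum>i<l. e i *\<^sub>R ycoroot h l \<alpha> i) \<in> h"
  using Yh subspace_scale[OF subh[OF sc dimh sr]] by (intro subspace_sum[OF subh[OF sc dimh sr]]) blast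

lemma part1:
  assumes y: "y \<in> h"
  shows "(\<forall>i<l. \<exists>m::int. \<alpha> i y = of_int m * pi) \<longleftrightarrow> (\<exists>k::nat \<Rightarrow> int. y = (\<Sum>i<l. of_int (k i) *\<^sub>R ycoroot h l \<alpha> i))"
proof
  assume a: "\<forall>i<l. \<exists>m::int. \<alpha> i y = of_int m * pi"
  define k where "k i = (SOME m::int. \<alpha> i y = of_int m * pi)" for i
  have k: "\<alpha> i y = of_int (k i) * pi" if "i < l" for i
    unfolding k_def using a that by (metis (mono_tags, lifting) someI_ex)
  define d where "d = y - (\<Sum>i<l. of_int (k i) *\<^sub>R ycoroot h l \<alpha> i)"
  have dh: "d \<in> h" unfolding d_def by (rule subspace_diff[OF subh[OF sc dimh sr] y sumY_h])
  have "\<forall>j<l. \<alpha> j d = 0"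
  proof (intro allI impI)
    fix j assume j: "j < l"
    have "\<alpha> j d = \<alpha> j y - \<alpha> j (\<Sum>i<l. of_int (k i) *\<^sub>R ycoroot h l \<alpha> i)"
      unfolding d_def using al_diff[OF sc dimh sr j y sumY_h] .
    also have "\<dots> = 0" using ycomb[OF j] k[OF j] by simp
    finally show "\<alpha> j d = 0" .
  qed
  then have "d = 0" using coroot_unique0[OF sc dimh sr dh] by blast
  then show "\<exists>k::nat \<Rightarrow> int. y = (\<Sum>i<l. of_int (k i) *\<^sub>R ycoroot h l \<alpha> i)" unfolding d_def by auto
next
  assume "\<exists>k::nat \<Rightarrow> int. y = (\<Sum>i<l. of_int (k i) *\<^sub>R ycoroot h l \<alpha> i)"
  then obtain k :: "nat \<Rightarrow> int" where k: "y = (\<Sum>i<l. of_int (k i) *\<^sub>R ycoroot h l \<alpha> i)" by blast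
  show "\<forall>i<l. \<exists>m::int. \<alpha> i y = of_int m * pi"
    using ycomb[of _ "\<lambda>i. of_int (k i)"] k by auto
qed

lemma eigen_int:
  assumes i: "i < l" and b: "b \<noteq> 0" "brR c (ycoroot h l \<alpha> i) b = \<mu> *\<^sub>R b"
  shows "\<exists>n::int. \<mu> = of_int n * pi"
proof -
  let ?y = "ycoroot h l \<alpha> i"
  obtain lam X where X0: "X \<noteq> 0" and Xy: "brR c ?y X = \<mu> *\<^sub>R X"
    and lH: "\<forall>H\<in>h. brR c H X = lam H *\<^sub>R X" and out: "\<forall>x. x \<notin> h \<longrightarrow> lam x = 0"
    and add: "\<forall>x\<in>h. \<forall>z\<in>h. lam (x + z) = lam x + lam z"
    and hom: "\<forall>a. \<forall>x\<in>h. lam (a *\<^sub>R x) = a * lam x"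
    using weight_exists[OF L sc Yh[OF i] b] by blast
  have e: "brR c ?y X = lam ?y *\<^sub>R X" using lH Yh[OF i] by blast
  have "(\<mu> - lam ?y) *\<^sub>R X = \<mu> *\<^sub>R X - lam ?y *\<^sub>R X" by (rule scaleR_diff_left)
  also have "\<dots> = 0" unfolding Xy[symmetric] e[symmetric] by simp
  finally have "(\<mu> - lam ?y) *\<^sub>R X = 0" .
  then have mu: "\<mu> = lam ?y" using X0 by simp
  show ?thesis
  proof (cases "\<exists>H\<in>h. lam H \<noteq> 0")
    case True
    have "is_root c h lam" unfolding is_root_def using out add hom True X0 lH by blast
    then obtain n :: "nat \<Rightarrow> int" where n: "lam = (\<lambda>x. \<Sum>j<l. of_int (n j) * \<alpha> j x)"
      using sr unfolding simple_roots_def by blast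
    have "lam ?y = (\<Sum>j<l. of_int (n j) * (if j = i then pi else 0))"
      unfolding n using Yv[OF i] by (intro sum.cong) auto
    also have "\<dots> = of_int (n i) * pi" using i by (simp add: if_distrib cong: if_cong)
    finally show ?thesis using mu by blast
  next
    case False
    then have "lam ?y = 0" using Yh[OF i] by blast
    then show ?thesis using mu by (intro exI[of _ 0]) simp
  qed
qed

end



context
  fixes c :: "'n::finite \<Rightarrow> 'n \<Rightarrow> 'n \<Rightarrow> real" and h :: "(real^'n) set" and l :: nat
    and \<alpha> :: "nat \<Rightarrow> real^'n \<Rightarrow> real"
  assumes L: "is_lie_algebra c" and sc: "split_cartan c h" and dimh: "l = dim h" and sr: "simple_roots c h l \<alpha>"
begin

lemma part2:
  assumes i: "i < l" and k: "odd k"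
  shows "gexp c ((\<i> * of_int k) *s cplx (ycoroot h l \<alpha> i)) \<in> Gtilde c
    \<and> gexp c ((\<i> * of_int k) *s cplx (ycoroot h l \<alpha> i)) ** gexp c ((\<i> * of_int k) *s cplx (ycoroot h l \<alpha> i)) = mat 1
    \<and> gexp c ((\<i> * of_int k) *s cplx (ycoroot h l \<alpha> i)) \<noteq> mat 1"
proof -
  define y where "y = ycoroot h l \<alpha> i"
  define G where "G = gexp c ((\<i> * of_int k) *s cplx y)"
  have yh: "y \<in> h" unfolding y_def by (rule Yh[OF L sc dimh sr i])
  have Gev: "G *v cplx b = exp (\<i> * complex_of_real (of_int k * \<mu>)) *s cplx b"
    if b: "brR c y b = \<mu> *\<^sub>R b" for b \<mu>
  proof -
    have "G *v cplx b = exp ((\<i> * of_int k) * complex_of_real \<mu>) *s cplx b"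
      unfolding G_def gexp_def by (rule mexp_eig[OF ad_eig[OF b]])
    also have "(\<i> * of_int k) * complex_of_real \<mu> = \<i> * complex_of_real (of_int k * \<mu>)" by simp
    finally show ?thesis .
  qed
  obtain B where iB: "independent B" and sB: "span B = UNIV" and eB: "\<forall>v\<in>B. \<exists>\<mu>. brR c y v = \<mu> *\<^sub>R v"
    using sc yh unfolding split_cartan_def by blast
  have fB: "finite B" using iB by (simp add: finiteI_independent)
  have nz: "b \<noteq> 0" if "b \<in> B" for b using iB that dependent_zero by blast
  have sig: "\<exists>\<sigma>. G *v cplx b = complex_of_real \<sigma> *s cplx b \<and> \<sigma>\<^sup>2 = 1" if b: "b \<in> B" for b
  proof -
    obtain \<mu> where mu: "brR c y b = \<mu> *\<^sub>R b" using eB b by blast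
    obtain n :: int where n: "\<mu> = of_int n * pi" using eigen_int[OF L sc dimh sr i nz[OF b] mu[unfolded y_def]] by blast
    have t: "of_int k * \<mu> = of_int (k * n) * pi" using n by simp
    show ?thesis using Gev[OF mu] exp_i_int_pi[OF t] by auto
  qed
  define sg where "sg b = (SOME \<sigma>. G *v cplx b = complex_of_real \<sigma> *s cplx b \<and> \<sigma>\<^sup>2 = 1)" for b
  have sgB: "G *v cplx b = complex_of_real (sg b) *s cplx b \<and> (sg b)\<^sup>2 = 1" if b: "b \<in> B" for b
    unfolding sg_def using sig[OF b] by (rule someI_ex)
  have expand: "\<exists>u. x = (\<Sum>b\<in>B. u b *\<^sub>R b)" for x
  proof -
    have "x \<in> range (\<lambda>u. \<Sum>b\<in>B. u b *\<^sub>R b)" using span_finite[OF fB] sB by simp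
    then show ?thesis by blast
  qed
  have cplx_comb: "cplx (\<Sum>b\<in>B. u b *\<^sub>R b) = (\<Sum>b\<in>B. complex_of_real (u b) *s cplx b)" for u
    by (simp add: cplx_sum cplx_scale)
  have adj: "G \<in> adjoint_group c"
    using adjoint_group.step[OF adjoint_group.one, of c "(\<i> * of_int k) *s cplx y"] unfolding G_def by simp
  have real: "\<forall>x::real^'n. \<exists>x'. G *v cplx x = cplx x'"
  proof
    fix x :: "real^'n"
    obtain u where u: "x = (\<Sum>b\<in>B. u b *\<^sub>R b)" using expand by blast
    have "G *v cplx x = (\<Sum>b\<in>B. complex_of_real (u b) *s (G *v cplx b))"
      unfolding u by (rule mv_cplx_comb)
    also have "\<dots> = (\<Sum>b\<in>B. complex_of_real (u b * sg b) *s cplx b)"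
      using sgB by (intro sum.cong refl) (simp add: vector_smult_assoc)
    also have "\<dots> = cplx (\<Sum>b\<in>B. (u b * sg b) *\<^sub>R b)" by (rule cplx_comb[symmetric])
    finally show "\<exists>x'. G *v cplx x = cplx x'" by blast
  qed
  have sq: "G ** G = mat 1"
  proof (rule mat_eq_cplx, rule allI)
    fix x :: "real^'n"
    obtain u where u: "x = (\<Sum>b\<in>B. u b *\<^sub>R b)" using expand by blast
    have "(G ** G) *v cplx x = (\<Sum>b\<in>B. complex_of_real (u b) *s ((G ** G) *v cplx b))"
      unfolding u by (rule mv_cplx_comb)
    also have "\<dots> = (\<Sum>b\<in>B. complex_of_real (u b) *s cplx b)"
    proof (intro sum.cong refl)
      fix b assume b: "b \<in> B"
      have "(G ** G) *v cplx b = G *v (G *v cplx b)" by (simp add: matrix_vector_mul_assoc)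
      also have "\<dots> = complex_of_real (sg b) *s (G *v cplx b)" using sgB[OF b] by (simp add: vector_scalar_commute)
      also have "\<dots> = (complex_of_real (sg b) * complex_of_real (sg b)) *s cplx b"
        using sgB[OF b] by (simp add: vector_smult_assoc)
      also have "complex_of_real (sg b) * complex_of_real (sg b) = 1"
        using sgB[OF b] by (metis of_real_1 of_real_mult power2_eq_square)
      also have "1 *s cplx b = cplx b" by simp
      finally show "complex_of_real (u b) *s ((G ** G) *v cplx b) = complex_of_real (u b) *s cplx b" by simp
    qed
    also have "\<dots> = cplx x" unfolding u by (rule cplx_comb[symmetric])
    finally show "(G ** G) *v cplx x = cplx x" .
  qed
  have ne: "G \<noteq> mat 1"
  proof
    assume G1: "G = mat 1"
    have "is_root c h (\<alpha> i)" using sr i unfolding simple_roots_def by blast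
    then obtain X where X0: "X \<noteq> 0" and XH: "\<forall>H\<in>h. brR c H X = \<alpha> i H *\<^sub>R X"
      unfolding is_root_def by blast
    have Xy: "brR c y X = pi *\<^sub>R X" using XH yh Yv[OF L sc dimh sr i i] unfolding y_def by simp
    have t: "of_int k * pi = of_int k * pi" ..
    have "G *v cplx X = complex_of_real (cos (of_int k * pi)) *s cplx X"
      using Gev[OF Xy] exp_i_int_pi[OF t] by simp
    then have "cplx X = complex_of_real (cos (of_int k * pi)) *s cplx X" using G1 by simp
    then have sub: "(1 - complex_of_real (cos (of_int k * pi))) *s cplx X = 0"
      by (simp add: vector_sub_rdistrib)
    moreover have "cplx X \<noteq> 0" using X0 cplx_inj cplx_zero by metis
    ultimately have "1 - complex_of_real (cos (of_int k * pi)) = 0" using vector_mul_eq_0 by blast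
    then have "complex_of_real (cos (of_int k * pi)) = 1" by simp
    then have "cos (of_int k * pi) = 1" by (simp add: of_real_eq_1_iff)
    then obtain n :: int where "of_int k * pi = of_int n * 2 * pi" using cos_one_2pi_int by blast
    then have "real_of_int k = real_of_int (2 * n)" by simp
    then have "k = 2 * n" by linarith
    then show False using k by simp
  qed
  show ?thesis using adj real sq ne unfolding Gtilde_def G_def y_def by blast
qed

end

theorem lemma2p2p1:
  fixes c :: "'n::finite \<Rightarrow> 'n \<Rightarrow> 'n \<Rightarrow> real"
    and h :: "(real^'n) set" and l :: nat and \<alpha> :: "nat \<Rightarrow> real^'n \<Rightarrow> real"
  assumes "semisimple c"
    and "split_cartan c h"
    and "l = dim h"
    and "simple_roots c h l \<alpha>"
  shows "(\<forall>x\<in>h. \<forall>y\<in>h.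
            (\<forall>i<l. exp (complex_of_real (\<alpha> i x) + \<i> * complex_of_real (\<alpha> i y)) \<in> \<real>)
            \<longleftrightarrow> (\<exists>k::nat \<Rightarrow> int. y = (\<Sum>i<l. of_int (k i) *\<^sub>R ycoroot h l \<alpha> i)))
       \<and> (\<forall>i<l. \<forall>k::int. odd k \<longrightarrow>
            gexp c ((\<i> * of_int k) *s cplx (ycoroot h l \<alpha> i)) \<in> Gtilde c
          \<and> gexp c ((\<i> * of_int k) *s cplx (ycoroot h l \<alpha> i)) ** gexp c ((\<i> * of_int k) *s cplx (ycoroot h l \<alpha> i)) = mat 1
          \<and> gexp c ((\<i> * of_int k) *s cplx (ycoroot h l \<alpha> i)) \<noteq> mat 1)"
proof -
  have L: "is_lie_algebra c" using assms(1) by (simp add: semisimple_def)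
  have P1: "\<forall>x\<in>h. \<forall>y\<in>h.
            (\<forall>i<l. exp (complex_of_real (\<alpha> i x) + \<i> * complex_of_real (\<alpha> i y)) \<in> \<real>)
            \<longleftrightarrow> (\<exists>k::nat \<Rightarrow> int. y = (\<Sum>i<l. of_int (k i) *\<^sub>R ycoroot h l \<alpha> i))"
  proof (intro ballI)
    fix x y assume "x \<in> h" "y \<in> h"
    show "(\<forall>i<l. exp (complex_of_real (\<alpha> i x) + \<i> * complex_of_real (\<alpha> i y)) \<in> \<real>)
            \<longleftrightarrow> (\<exists>k::nat \<Rightarrow> int. y = (\<Sum>i<l. of_int (k i) *\<^sub>R ycoroot h l \<alpha> i))"
      unfolding exp_real_iff by (rule part1[OF L assms(2,3,4) \<open>y \<in> h\<close>])
  qed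
  have P2: "\<forall>i<l. \<forall>k::int. odd k \<longrightarrow>
            gexp c ((\<i> * of_int k) *s cplx (ycoroot h l \<alpha> i)) \<in> Gtilde c
          \<and> gexp c ((\<i> * of_int k) *s cplx (ycoroot h l \<alpha> i)) ** gexp c ((\<i> * of_int k) *s cplx (ycoroot h l \<alpha> i)) = mat 1
          \<and> gexp c ((\<i> * of_int k) *s cplx (ycoroot h l \<alpha> i)) \<noteq> mat 1"
    using part2[OF L assms(2,3,4)] by blast
  show ?thesis using P1 P2 by blast
qed


end
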